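(* For every join query $\mathcal R$, the MO bound $\sum_{c\in\mathcal C_2}\mathrm{IN}^{\mathsf{MO}(\mathcal R(c))}$ is $O(\mathsf{AGM}(\mathcal R))$, where the hidden factor depends only on the query schema (number of relations and attributes) and is at most polylogarithmic in $\mathrm{IN}$, but does not otherwise depend on the tuples.
   Context: A join query consists of a finite set $\mathcal R$ of relations; each $R$ is a finite set of tuples over attribute set $\mathsf{attr}(R)$; $\mathcal A=\bigcup_R\mathsf{attr}(R)$. $\mathrm{IN}=\sum_{R\in\mathcal R}|R|\ge 2$ (always the input size of the original query), and $\log$ denotes $\log_{\mathrm{IN}}$. For a relation $S$, $A\subseteq\mathsf{attr}(S)$ and $v\in\pi_A(S)$: $\mathsf{deg}(v,S,A)=|\{t\in S:\pi_A(t)=v\}|$; $d_{S,A}=\max_{v\in\pi_A(S)}\mathsf{deg}(v,S,A)$ for $A\neq\emptyset$, $d_{S,\emptyset}=|S|$; for $A\subseteq B\subseteq\mathsf{attr}(S)$, $d(A,B,S)=\log d_{\pi_B(S),A}$. Degree configurations: for $L>1$, buckets $B_l=[L^l,L^{l+1})$, $l\in\mathbb N$, ordered by index. A degree configuration $c$ maps each $(R,A)$ with $R\in\mathcal R$, $A\subseteq\mathsf{attr}(R)$ to a bucket $c(R,A)$ with $A'\subseteq A\Rightarrow c(R,A)\le c(R,A')$, $c(R,\mathsf{attr}(R))=B_0$, $c(R,\emptyset)=B_{\lfloor\log_L|R|\rfloor}$; $\mathcal C_L$ is the set of these. $R(c)=\{t\in R:\forall A\subseteq\mathsf{attr}(R),\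 \mathsf{deg}(\pi_A(t),R,A)\in c(R,A)\}$ and $\mathcal R(c)=\{R(c):R\in\mathcal R\}$. For a set $\mathcal S$ of (nonempty) relations with attribute set $\mathcal A$, the MO program has variables $s_F$ ($F\subseteq\mathcal A$) and constraints $s_\emptyset=0$; $s_F\le s_{F'}$ for $F\subseteq F'$; $s_{B\cup E}\le s_{A\cup E}+d(A,B,S)$ for all $S\in\mathcal S$, $E\subseteq\mathcal A$, $A\subseteq B\subseteq\mathsf{attr}(S)$; $\mathsf{MO}(\mathcal S)$ is the maximum of $s_{\mathcal A}$ (degrees computed in the relations of $\mathcal S$). (Configurations $c$ with some $R(c)=\emptyset$ contribute nothing to the join and may be omitted from the sum.) AGM bound: $\mathsf{AGM}(\mathcal S)=\mathrm{IN}^{\rho^*}$ where $\rho^*=\min\sum_{S\in\mathcal S}w_S\log|S|$ over $w_S\ge0$ with $\sum_{S:a\in\mathsf{attr}(S)}w_S\ge1$ for every attribute $a$. *)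

theory Defs
  imports Complex_Main
begin

(* Tuples over attributes 'a with values 'v are partial maps; a tuple t of a
   relation with schema attr has dom t = attr.  Projection onto A is t |` A. *)

type_synonym ('a, 'v) tuple = "'a \<rightharpoonup> 'v"

definition proj :: "'a set \<Rightarrow> ('a, 'v) tuple set \<Rightarrow> ('a, 'v) tuple set" where
  "proj A S = (\<lambda>t. t |` A) ` S"

definition deg :: "('a, 'v) tuple \<Rightarrow> ('a, 'v) tuple set \<Rightarrow> 'a set \<Rightarrow> nat" where
  "deg v S A = card {t \<in> S. t |` A = v}"

definition maxdeg :: "('a, 'v) tuple set \<Rightarrow> 'a set \<Rightarrow> nat" where
  "maxdeg S A = (if A = {} then card S else Max ((\<lambda>v. deg v S A) ` proj A S))"

definition dlog :: "real \<Rightarrow> 'a set \<Rightarrow> 'a set \<Rightarrow> ('a, 'v) tuple set \<Rightarrow> real" where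
  "dlog IN A B S = log IN (real (maxdeg (proj B S) A))"

definition all_attrs :: "'i set \<Rightarrow> ('i \<Rightarrow> 'a set) \<Rightarrow> 'a set" where
  "all_attrs I attr = \<Union> (attr ` I)"

definition input_size :: "'i set \<Rightarrow> ('i \<Rightarrow> ('a, 'v) tuple set) \<Rightarrow> real" where
  "input_size I R = real (\<Sum>i\<in>I. card (R i))"

definition MO_feasible :: "real \<Rightarrow> 'i set \<Rightarrow> ('i \<Rightarrow> 'a set) \<Rightarrow> ('i \<Rightarrow> ('a, 'v) tuple set)
    \<Rightarrow> ('a set \<Rightarrow> real) \<Rightarrow> bool" where
  "MO_feasible IN I attr S s \<longleftrightarrow>
     s {} = 0 \<and>
     (\<forall>F F'. F \<subseteq> F' \<and> F' \<subseteq> all_attrs I attr \<longrightarrow> s F \<le> s F') \<and>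
     (\<forall>i\<in>I. \<forall>E. E \<subseteq> all_attrs I attr \<longrightarrow> (\<forall>A B. A \<subseteq> B \<and> B \<subseteq> attr i \<longrightarrow>
        s (B \<union> E) \<le> s (A \<union> E) + dlog IN A B (S i)))"

definition MO :: "real \<Rightarrow> 'i set \<Rightarrow> ('i \<Rightarrow> 'a set) \<Rightarrow> ('i \<Rightarrow> ('a, 'v) tuple set) \<Rightarrow> real" where
  "MO IN I attr S = Sup {s (all_attrs I attr) | s. MO_feasible IN I attr S s}"

definition AGM :: "real \<Rightarrow> 'i set \<Rightarrow> ('i \<Rightarrow> 'a set) \<Rightarrow> ('i \<Rightarrow> ('a, 'v) tuple set) \<Rightarrow> real" where
  "AGM IN I attr S = IN powr (Inf {(\<Sum>i\<in>I. w i * log IN (real (card (S i)))) | w.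
      (\<forall>i\<in>I. 0 \<le> w i) \<and>
      (\<forall>a\<in>all_attrs I attr. (\<Sum>i\<in>{i\<in>I. a \<in> attr i}. w i) \<ge> 1)})"

definition bucket :: "real \<Rightarrow> nat \<Rightarrow> real set" where
  "bucket L l = {x. L ^ l \<le> x \<and> x < L ^ Suc l}"

(* degree configurations C_L: c i A is the index of the bucket c(R_i, A);
   c is taken extensional (0) outside i in I, A \<subseteq> attr i *)
definition configs :: "real \<Rightarrow> 'i set \<Rightarrow> ('i \<Rightarrow> 'a set) \<Rightarrow> ('i \<Rightarrow> ('a, 'v) tuple set)
    \<Rightarrow> ('i \<Rightarrow> 'a set \<Rightarrow> nat) set" where
  "configs L I attr R = {c.
     (\<forall>i\<in>I. \<forall>A A'. A' \<subseteq> A \<and> A \<subseteq> attr i \<longrightarrow> c i A \<le> c i A') \<and>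
     (\<forall>i\<in>I. c i (attr i) = 0) \<and>
     (\<forall>i\<in>I. int (c i {}) = \<lfloor>log L (real (card (R i)))\<rfloor>) \<and>
     (\<forall>i A. i \<notin> I \<or> \<not> A \<subseteq> attr i \<longrightarrow> c i A = 0)}"

definition restr :: "real \<Rightarrow> ('i \<Rightarrow> 'a set) \<Rightarrow> ('i \<Rightarrow> ('a, 'v) tuple set)
    \<Rightarrow> ('i \<Rightarrow> 'a set \<Rightarrow> nat) \<Rightarrow> 'i \<Rightarrow> ('a, 'v) tuple set" where
  "restr L attr R c i = {t \<in> R i. \<forall>A. A \<subseteq> attr i \<longrightarrow>
       real (deg (t |` A) (R i) A) \<in> bucket L (c i A)}"

definition MO_bound :: "real \<Rightarrow> 'i set \<Rightarrow> ('i \<Rightarrow> 'a set) \<Rightarrow> ('i \<Rightarrow> ('a, 'v) tuple set) \<Rightarrow> real" where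
  "MO_bound L I attr R =
     (\<Sum>c \<in> {c \<in> configs L I attr R. \<forall>i\<in>I. restr L attr R c i \<noteq> {}}.
        input_size I R powr MO (input_size I R) I attr (restr L attr R c))"

end

theory Submission
  imports Defs "HOL-Library.FuncSet"
begin

lemma deg_count:
  fixes R :: "'i \<Rightarrow> ('a, 'v) tuple set"
  assumes fin: "finite (R i)" and AB: "A \<subseteq> B" "B \<subseteq> attr i"
    and t0: "t0 \<in> restr 2 attr R c i"
  shows "real (deg (t0 |` A) (proj B (restr 2 attr R c i)) A) * 2 ^ c i B < 2 ^ (c i A + 1)"
    and "1 \<le> deg (t0 |` A) (proj B (restr 2 attr R c i)) A"
proof -
  define S where "S = restr 2 attr R c i"
  have SR: "S \<subseteq> R i" unfolding S_def restr_def by auto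
  have finS: "finite S" using SR fin finite_subset by blast
  define W where "W = {w \<in> proj B S. w |` A = t0 |` A}"
  have finW: "finite W" unfolding W_def proj_def using finS by auto
  have degW: "deg (t0 |` A) (proj B S) A = card W" unfolding deg_def W_def by simp
  have "t0 |` B \<in> W" using t0 AB unfolding W_def proj_def S_def
    by (auto simp: Int_absorb1)
  then have "1 \<le> card W" using finW
    by (metis One_nat_def Suc_leI card_gt_0_iff empty_iff)
  then show "1 \<le> deg (t0 |` A) (proj B (restr 2 attr R c i)) A" using degW S_def by simp
  define U where "U = (\<Union>w\<in>W. {t\<in>R i. t |` B = w})"
  have cardU: "card U = (\<Sum>w\<in>W. card {t\<in>R i. t |` B = w})"
    unfolding U_def by (rule card_UN_disjoint) (use finW fin in auto)
  have subU: "U \<subseteq> {t\<in>R i. t |` A = t0 |` A}"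
  proof
    fix t assume "t \<in> U"
    then obtain w where w: "w \<in> W" "t \<in> R i" "t |` B = w" unfolding U_def by auto
    have "t |` A = (t |` B) |` A" using AB by (simp add: Int_absorb1)
    then show "t \<in> {t\<in>R i. t |` A = t0 |` A}" using w unfolding W_def by auto
  qed
  have each: "\<forall>w\<in>W. (2::real) ^ c i B \<le> real (card {t\<in>R i. t |` B = w})"
  proof
    fix w assume "w \<in> W"
    then obtain t where t: "t \<in> S" "w = t |` B" unfolding W_def proj_def by auto
    then have "real (deg (t |` B) (R i) B) \<in> bucket 2 (c i B)"
      using AB unfolding S_def restr_def by auto
    then show "(2::real) ^ c i B \<le> real (card {t\<in>R i. t |` B = w})"
      unfolding bucket_def deg_def t(2) by auto
  qed
  have top: "real (deg (t0 |` A) (R i) A) < 2 ^ (c i A + 1)"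
  proof -
    have "real (deg (t0 |` A) (R i) A) \<in> bucket 2 (c i A)"
      using t0 AB unfolding restr_def by auto
    then show ?thesis unfolding bucket_def by auto
  qed
  have "real (card W) * 2 ^ c i B = (\<Sum>w\<in>W. (2::real) ^ c i B)" by simp
  also have "\<dots> \<le> (\<Sum>w\<in>W. real (card {t\<in>R i. t |` B = w}))"
    by (rule sum_mono) (use each in auto)
  also have "\<dots> = real (card U)" using cardU by simp
  also have "\<dots> \<le> real (card {t\<in>R i. t |` A = t0 |` A})"
    using subU fin by (simp add: card_mono)
  also have "\<dots> = real (deg (t0 |` A) (R i) A)" unfolding deg_def by simp
  also have "\<dots> < 2 ^ (c i A + 1)" by (rule top)
  finally show "real (deg (t0 |` A) (proj B (restr 2 attr R c i)) A) * 2 ^ c i B < 2 ^ (c i A + 1)"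
    using degW S_def by simp
qed


lemma maxdeg_bound:
  fixes R :: "'i \<Rightarrow> ('a, 'v) tuple set"
  assumes fin: "finite (R i)" and AB: "A \<subseteq> B" "B \<subseteq> attr i"
    and ne: "restr 2 attr R c i \<noteq> {}"
  shows "real (maxdeg (proj B (restr 2 attr R c i)) A) * 2 ^ c i B < 2 ^ (c i A + 1)
       \<and> 1 \<le> maxdeg (proj B (restr 2 attr R c i)) A"
proof -
  define S where "S = restr 2 attr R c i"
  have SR: "S \<subseteq> R i" unfolding S_def restr_def by auto
  have finS: "finite S" using SR fin finite_subset by blast
  have "\<exists>t0\<in>S. maxdeg (proj B S) A = deg (t0 |` A) (proj B S) A"
  proof (cases "A = {}")
    case True
    obtain t0 where "t0 \<in> S" using ne S_def by auto
    moreover have "maxdeg (proj B S) A = deg (t0 |` A) (proj B S) A"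
      using True unfolding maxdeg_def deg_def by simp
    ultimately show ?thesis by blast
  next
    case False
    have fp: "finite ((\<lambda>v. deg v (proj B S) A) ` proj A (proj B S))"
      unfolding proj_def using finS by auto
    have nep: "(\<lambda>v. deg v (proj B S) A) ` proj A (proj B S) \<noteq> {}"
      unfolding proj_def using ne S_def by auto
    obtain v where v: "v \<in> proj A (proj B S)"
      "maxdeg (proj B S) A = deg v (proj B S) A"
      using Max_in[OF fp nep] False unfolding maxdeg_def by auto
    then obtain t0 where "t0 \<in> S" "v = (t0 |` B) |` A" unfolding proj_def by auto
    moreover have "B \<inter> A = A" using AB by blast
    ultimately have "v = t0 |` A" by simp
    then show ?thesis using v \<open>t0 \<in> S\<close> by blast
  qed
  then obtain t0 where "t0 \<in> S" "maxdeg (proj B S) A = deg (t0 |` A) (proj B S) A" by blast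
  then show ?thesis using deg_count[where R=R and i=i and attr=attr and c=c, OF fin AB(1) AB(2)] S_def by simp
qed


lemma dlog_le:
  fixes md IN :: real
  assumes "1 \<le> md" "md * 2 ^ b < 2 ^ a" "1 < IN"
  shows "log IN md \<le> log IN 2 * (real a - real b)"
proof -
  have "log IN md + real b * log IN 2 = log IN (md * 2 ^ b)"
    using assms by (simp add: log_mult log_nat_power)
  also have "\<dots> \<le> log IN (2 ^ a)"
    using assms by (subst log_le_cancel_iff) auto
  also have "\<dots> = real a * log IN 2" by (simp add: log_nat_power)
  finally show ?thesis by (simp add: algebra_simps)
qed

lemma cfg_mono: "c \<in> configs L I attr R \<Longrightarrow> i \<in> I \<Longrightarrow> A' \<subseteq> A \<Longrightarrow> A \<subseteq> attr i \<Longrightarrow> c i A \<le> c i A'"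
  unfolding configs_def by blast

lemma feas_step: "MO_feasible IN I attr S s \<Longrightarrow> i \<in> I \<Longrightarrow> E \<subseteq> all_attrs I attr \<Longrightarrow> A \<subseteq> B
   \<Longrightarrow> B \<subseteq> attr i \<Longrightarrow> s (B \<union> E) \<le> s (A \<union> E) + dlog IN A B (S i)"
  unfolding MO_feasible_def by blast

lemma chain:
  fixes R :: "'i \<Rightarrow> ('a, 'v) tuple set" and s :: "'a set \<Rightarrow> real"
  assumes finI: "finite I" and finR: "\<forall>i\<in>I. finite (R i)"
    and cc: "c \<in> configs 2 I attr R" and ne: "\<forall>i\<in>I. restr 2 attr R c i \<noteq> {}"
    and IN: "1 < IN" and feas: "MO_feasible IN I attr (restr 2 attr R c) s"
    and w: "\<forall>i\<in>I. 0 \<le> w i"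
    and cov: "\<forall>a\<in>all_attrs I attr. 1 \<le> (\<Sum>i\<in>{i\<in>I. a\<in>attr i}. w i)"
  shows "set xs \<subseteq> all_attrs I attr \<Longrightarrow> s (set xs) \<le> log IN 2 *
     ((\<Sum>i\<in>I. w i * (real (c i {}) - real (c i (attr i \<inter> set xs)))) + real (length xs))"
proof (induction xs rule: rev_induct)
  case Nil
  then show ?case using feas unfolding MO_feasible_def by simp
next
  case (snoc a xs)
  define X where "X = set xs"
  define L where "L = log IN 2"
  have L0: "0 < L" unfolding L_def using IN by simp
  have aA: "a \<in> all_attrs I attr" and XA: "X \<subseteq> all_attrs I attr"
    using snoc.prems X_def by auto
  have IH: "s X \<le> L * ((\<Sum>i\<in>I. w i * (real (c i {}) - real (c i (attr i \<inter> X)))) + real (length xs))"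
    using snoc.IH snoc.prems X_def L_def by auto
  define J where "J = {i\<in>I. a \<in> attr i}"
  define D where "D i = real (c i (attr i \<inter> X)) - real (c i (attr i \<inter> insert a X))" for i
  have D0: "0 \<le> D i" if "i \<in> I" for i
  proof -
    have "c i (attr i \<inter> insert a X) \<le> c i (attr i \<inter> X)"
      by (rule cfg_mono[OF cc that]) auto
    then show ?thesis unfolding D_def by simp
  qed
  have DJ: "D i = 0" if "i \<in> I" "i \<notin> J" for i
  proof -
    have "attr i \<inter> insert a X = attr i \<inter> X" using that J_def by auto
    then show ?thesis unfolding D_def by simp
  qed
  have step: "s (insert a X) \<le> s X + L * (D i + 1)" if "i \<in> J" for i
  proof -
    have iI: "i \<in> I" and ai: "a \<in> attr i" using that J_def by auto
    let ?A = "attr i \<inter> X" and ?B = "attr i \<inter> insert a X"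
    have "s (?B \<union> X) \<le> s (?A \<union> X) + dlog IN ?A ?B (restr 2 attr R c i)"
      by (rule feas_step[OF feas iI XA]) auto
    moreover have "?B \<union> X = insert a X" using ai by auto
    moreover have "?A \<union> X = X" by auto
    moreover have "dlog IN ?A ?B (restr 2 attr R c i) \<le> L * (D i + 1)"
    proof -
      have mb: "real (maxdeg (proj ?B (restr 2 attr R c i)) ?A) * 2 ^ c i ?B < 2 ^ (c i ?A + 1)
       \<and> 1 \<le> maxdeg (proj ?B (restr 2 attr R c i)) ?A"
        by (rule maxdeg_bound) (use finR iI ne in auto)
      have "dlog IN ?A ?B (restr 2 attr R c i) \<le> log IN 2 * (real (c i ?A + 1) - real (c i ?B))"
        unfolding dlog_def by (rule dlog_le) (use mb IN in auto)
      then show ?thesis unfolding D_def L_def by (simp add: algebra_simps)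
    qed
    ultimately show ?thesis by simp
  qed
  have finJ: "finite J" using finI J_def by simp
  have Jne: "J \<noteq> {}" using aA unfolding J_def all_attrs_def by auto
  have "Min (D ` J) \<in> D ` J" using finJ Jne by simp
  then obtain i0 where i00: "i0 \<in> J" "D i0 = Min (D ` J)" by auto
  have i0: "i0 \<in> J" "\<forall>i\<in>J. D i0 \<le> D i" using i00 finJ by auto
  have i0I: "i0 \<in> I" using i0 J_def by auto
  have WJ: "1 \<le> (\<Sum>i\<in>J. w i)" using cov aA J_def by simp
  have "D i0 \<le> D i0 * (\<Sum>i\<in>J. w i)" using WJ D0[OF i0I] by (simp add: mult_le_cancel_left1)
  also have "\<dots> = (\<Sum>i\<in>J. w i * D i0)" by (simp add: sum_distrib_left mult.commute)
  also have "\<dots> \<le> (\<Sum>i\<in>J. w i * D i)"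
    by (rule sum_mono) (use i0 w J_def in \<open>auto intro: mult_left_mono\<close>)
  also have "\<dots> = (\<Sum>i\<in>I. w i * D i)"
    by (rule sum.mono_neutral_left) (use finI J_def DJ in auto)
  finally have Di0: "D i0 \<le> (\<Sum>i\<in>I. w i * D i)" .
  have "s (insert a X) \<le> s X + L * (D i0 + 1)" by (rule step[OF i0(1)])
  also have "\<dots> \<le> L * ((\<Sum>i\<in>I. w i * (real (c i {}) - real (c i (attr i \<inter> X)))) + real (length xs))
      + L * ((\<Sum>i\<in>I. w i * D i) + 1)"
  proof (rule add_mono[OF IH])
    show "L * (D i0 + 1) \<le> L * ((\<Sum>i\<in>I. w i * D i) + 1)"
      using Di0 L0 by (intro mult_left_mono) auto
  qed
  also have "\<dots> = L * ((\<Sum>i\<in>I. w i * (real (c i {}) - real (c i (attr i \<inter> X))) + w i * D i) + real (length xs) + 1)"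
    by (simp only: sum.distrib) (simp add: algebra_simps)
  also have "\<dots> = L * ((\<Sum>i\<in>I. w i * (real (c i {}) - real (c i (attr i \<inter> insert a X)))) + real (length xs) + 1)"
    unfolding D_def by (simp add: algebra_simps)
  finally show ?case using X_def L_def by (simp add: algebra_simps)
qed


lemma MO_le:
  fixes R :: "'i \<Rightarrow> ('a, 'v) tuple set"
  assumes finI: "finite I" and finA: "\<forall>i\<in>I. finite (attr i)" and finR: "\<forall>i\<in>I. finite (R i)"
    and cc: "c \<in> configs 2 I attr R" and ne: "\<forall>i\<in>I. restr 2 attr R c i \<noteq> {}"
    and IN: "1 < IN"
    and cardR: "\<forall>i\<in>I. log IN 2 * real (c i {}) \<le> log IN (real (card (R i)))"
    and y: "y \<in> {(\<Sum>i\<in>I. w i * log IN (real (card (R i)))) | w.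
      (\<forall>i\<in>I. 0 \<le> w i) \<and>
      (\<forall>a\<in>all_attrs I attr. (\<Sum>i\<in>{i\<in>I. a \<in> attr i}. w i) \<ge> 1)}"
  shows "MO IN I attr (restr 2 attr R c) \<le> y + log IN 2 * real (card (all_attrs I attr))"
proof -
  obtain w where yw: "y = (\<Sum>i\<in>I. w i * log IN (real (card (R i))))"
    and w0: "\<forall>i\<in>I. 0 \<le> w i"
    and cov: "\<forall>a\<in>all_attrs I attr. 1 \<le> (\<Sum>i\<in>{i\<in>I. a \<in> attr i}. w i)"
    using y by blast
  define L where "L = log IN 2"
  have L0: "0 < L" unfolding L_def using IN by simp
  have finAll: "finite (all_attrs I attr)" unfolding all_attrs_def using finI finA by auto
  obtain xs where xs: "set xs = all_attrs I attr" "distinct xs"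
    using finite_distinct_list[OF finAll] by blast
  have len: "length xs = card (all_attrs I attr)" using distinct_card xs by metis
  have bnd: "s (all_attrs I attr) \<le> y + L * real (card (all_attrs I attr))"
    if fs: "MO_feasible IN I attr (restr 2 attr R c) s" for s
  proof -
    have ch: "s (set xs) \<le> L *
      ((\<Sum>i\<in>I. w i * (real (c i {}) - real (c i (attr i \<inter> set xs)))) + real (length xs))"
      unfolding L_def by (rule chain[OF finI finR cc ne IN fs w0 cov]) (use xs in simp)
    have eq: "(\<Sum>i\<in>I. w i * (real (c i {}) - real (c i (attr i \<inter> set xs))))
        = (\<Sum>i\<in>I. w i * real (c i {}))"
    proof (rule sum.cong)
      fix i assume i: "i \<in> I"
      have "attr i \<inter> set xs = attr i" using xs i unfolding all_attrs_def by auto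
      moreover have "c i (attr i) = 0" using cc i unfolding configs_def by blast
      ultimately show "w i * (real (c i {}) - real (c i (attr i \<inter> set xs))) = w i * real (c i {})"
        by simp
    qed simp
    have "L * (\<Sum>i\<in>I. w i * real (c i {})) = (\<Sum>i\<in>I. w i * (L * real (c i {})))"
      by (simp add: sum_distrib_left algebra_simps)
    also have "\<dots> \<le> (\<Sum>i\<in>I. w i * log IN (real (card (R i))))"
      by (rule sum_mono) (use w0 cardR L_def in \<open>auto intro: mult_left_mono\<close>)
    finally have "L * (\<Sum>i\<in>I. w i * real (c i {})) \<le> y" using yw by simp
    then show ?thesis using ch eq xs len by (simp add: algebra_simps)
  qed
  have feas0: "MO_feasible IN I attr (restr 2 attr R c) (\<lambda>_. 0)"
    unfolding MO_feasible_def
  proof (intro conjI ballI allI impI)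
    fix i E A B assume i: "i \<in> I" and AB: "A \<subseteq> B \<and> B \<subseteq> attr i"
    have "1 \<le> maxdeg (proj B (restr 2 attr R c i)) A"
      using maxdeg_bound[where R=R and i=i and attr=attr and c=c and A=A and B=B] finR ne i AB by auto
    then show "(0::real) \<le> 0 + dlog IN A B (restr 2 attr R c i)"
      unfolding dlog_def using IN by simp
  qed auto
  show ?thesis unfolding MO_def
    by (rule cSup_least) (use feas0 bnd L_def in auto)
qed

lemma log_chain: "1 < (b::real) \<Longrightarrow> 0 < x \<Longrightarrow> log b 2 * log 2 x = log b x"
  by (simp add: log_def)

theorem theorem3p3:
  fixes I :: "'i set" and attr :: "'i \<Rightarrow> 'a set"
  assumes "finite I" and "\<forall>i\<in>I. finite (attr i)"
  shows "\<exists>C::real. \<exists>k::nat. \<forall>R :: 'i \<Rightarrow> ('a, 'v) tuple set.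
           (\<forall>i\<in>I. finite (R i) \<and> R i \<noteq> {} \<and> (\<forall>t\<in>R i. dom t = attr i)) \<and>
           input_size I R \<ge> 2 \<longrightarrow>
           MO_bound 2 I attr R \<le>
             C * (ln (input_size I R)) ^ k * AGM (input_size I R) I attr R"
proof -
  note finI = assms(1) and finA = assms(2)
  define D where "D = Sigma I (\<lambda>i. Pow (attr i))"
  define K where "K = card D"
  define m where "m = card (all_attrs I attr)"
  have finD: "finite D" unfolding D_def using finI finA by auto
  show ?thesis
  proof (rule exI[of _ "(2 / ln 2) ^ K * 2 ^ m"], rule exI[of _ K], intro allI impI)
    fix R :: "'i \<Rightarrow> ('a, 'v) tuple set"
    assume H: "(\<forall>i\<in>I. finite (R i) \<and> R i \<noteq> {} \<and> (\<forall>t\<in>R i. dom t = attr i)) \<and>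
           input_size I R \<ge> 2"
    define IN where "IN = input_size I R"
    have IN2: "2 \<le> IN" using H IN_def by simp
    have IN1: "1 < IN" using IN2 by simp
    have finR: "\<forall>i\<in>I. finite (R i)" using H by simp
    have cardle: "real (card (R i)) \<le> IN" if i: "i \<in> I" for i
    proof -
      have "card (R i) \<le> (\<Sum>j\<in>I. card (R j))" by (rule member_le_sum) (use i finI in auto)
      then show ?thesis unfolding IN_def input_size_def by (simp only: of_nat_le_iff)
    qed
    have card1: "1 \<le> card (R i)" if i: "i \<in> I" for i
      using H i card_gt_0_iff by (metis One_nat_def Suc_leI)
    define CS where "CS = {c \<in> configs 2 I attr R. \<forall>i\<in>I. restr 2 attr R c i \<noteq> {}}"
    define AG where "AG = AGM IN I attr R"
    have AG0: "0 \<le> AG" unfolding AG_def AGM_def by simp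
    define L where "L = log IN 2"
    have L0: "0 < L" unfolding L_def using IN1 by simp
    have termb: "IN powr MO IN I attr (restr 2 attr R c) \<le> 2 ^ m * AG" if c: "c \<in> CS" for c
    proof -
      have cc: "c \<in> configs 2 I attr R" and ne: "\<forall>i\<in>I. restr 2 attr R c i \<noteq> {}"
        using c CS_def by auto
      define Wset where "Wset = {(\<Sum>i\<in>I. w i * log IN (real (card (R i)))) | w.
      (\<forall>i\<in>I. 0 \<le> w i) \<and>
      (\<forall>a\<in>all_attrs I attr. (\<Sum>i\<in>{i\<in>I. a \<in> attr i}. w i) \<ge> 1)}"
      have cR: "\<forall>i\<in>I. log IN 2 * real (c i {}) \<le> log IN (real (card (R i)))"
      proof
        fix i assume i: "i \<in> I"
        have "int (c i {}) = \<lfloor>log 2 (real (card (R i)))\<rfloor>" using cc i unfolding configs_def by blast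
        then have "real (c i {}) \<le> log 2 (real (card (R i)))"
          by (metis of_int_floor_le of_int_of_nat_eq)
        then have "log IN 2 * real (c i {}) \<le> log IN 2 * log 2 (real (card (R i)))"
          using L0 L_def by (intro mult_left_mono) auto
        also have "\<dots> = log IN (real (card (R i)))"
          using log_chain[OF IN1] card1[OF i] by simp
        finally show "log IN 2 * real (c i {}) \<le> log IN (real (card (R i)))" .
      qed
      have Wne: "Wset \<noteq> {}"
      proof -
        have "(\<Sum>i\<in>I. 1 * log IN (real (card (R i)))) \<in> Wset"
          unfolding Wset_def
        proof (intro CollectI exI conjI)
          show "\<forall>a\<in>all_attrs I attr. 1 \<le> (\<Sum>i\<in>{i \<in> I. a \<in> attr i}. (\<lambda>_. 1::real) i)"
          proof
            fix a assume "a \<in> all_attrs I attr"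
            then have "{i \<in> I. a \<in> attr i} \<noteq> {}" unfolding all_attrs_def by auto
            then have "1 \<le> card {i \<in> I. a \<in> attr i}" using finI
              by (metis (no_types, lifting) One_nat_def Suc_leI card_gt_0_iff finite_subset mem_Collect_eq subsetI)
            then show "1 \<le> (\<Sum>i\<in>{i \<in> I. a \<in> attr i}. (\<lambda>_. 1::real) i)" by simp
          qed
        qed auto
        then show ?thesis by blast
      qed
      have "MO IN I attr (restr 2 attr R c) - L * real m \<le> Inf Wset"
      proof (rule cInf_greatest[OF Wne])
        fix y assume "y \<in> Wset"
        then have "MO IN I attr (restr 2 attr R c) \<le> y + log IN 2 * real (card (all_attrs I attr))"
          by (intro MO_le[OF finI finA finR cc ne IN1 cR]) (simp add: Wset_def)
        then show "MO IN I attr (restr 2 attr R c) - L * real m \<le> y" using L_def m_def by simp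
      qed
      then have "IN powr MO IN I attr (restr 2 attr R c) \<le> IN powr (Inf Wset + L * real m)"
        using IN1 by (intro powr_mono) auto
      also have "\<dots> = IN powr Inf Wset * IN powr (L * real m)" by (simp add: powr_add)
      also have "IN powr (L * real m) = 2 ^ m"
      proof -
        have "IN powr (L * real m) = (IN powr L) powr real m" by (simp add: powr_powr)
        also have "IN powr L = 2" unfolding L_def using IN1 by simp
        finally show ?thesis by (simp add: powr_realpow)
      qed
      also have "IN powr Inf Wset = AG" unfolding AG_def AGM_def Wset_def by simp
      finally show ?thesis by (simp add: mult.commute)
    qed
    have MB: "MO_bound 2 I attr R = (\<Sum>c\<in>CS. IN powr MO IN I attr (restr 2 attr R c))"
      unfolding MO_bound_def CS_def IN_def by simp
    have MB1: "MO_bound 2 I attr R \<le> real (card CS) * (2 ^ m * AG)"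
      unfolding MB by (rule sum_bounded_above) (use termb in auto)
    define N where "N = nat \<lfloor>log 2 IN\<rfloor>"
    have cN: "c i A \<le> N" if c: "c \<in> CS" and i: "i \<in> I" and A: "A \<subseteq> attr i" for c i A
    proof -
      have cc: "c \<in> configs 2 I attr R" using c CS_def by auto
      have "c i A \<le> c i {}" by (rule cfg_mono[OF cc i]) (use A in auto)
      moreover have "int (c i {}) = \<lfloor>log 2 (real (card (R i)))\<rfloor>" using cc i unfolding configs_def by blast
      moreover have "\<lfloor>log 2 (real (card (R i)))\<rfloor> \<le> \<lfloor>log 2 IN\<rfloor>"
        using cardle[OF i] card1[OF i] by (intro floor_mono) simp
      ultimately show ?thesis unfolding N_def by linarith
    qed
    define f where "f c = restrict (\<lambda>p. c (fst p) (snd p)) D" for c :: "'i \<Rightarrow> 'a set \<Rightarrow> nat"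
    have "card CS \<le> card (PiE D (\<lambda>_. {..N}))"
    proof (rule card_inj_on_le)
      show "inj_on f CS"
      proof
        fix c1 c2 assume c1: "c1 \<in> CS" and c2: "c2 \<in> CS" and eq: "f c1 = f c2"
        show "c1 = c2"
        proof (intro ext)
          fix i A
          show "c1 i A = c2 i A"
          proof (cases "(i, A) \<in> D")
            case True
            then show ?thesis using fun_cong[OF eq, of "(i, A)"] unfolding f_def by simp
          next
            case False
            then have "i \<notin> I \<or> \<not> A \<subseteq> attr i" unfolding D_def by auto
            then show ?thesis using c1 c2 unfolding CS_def configs_def by auto
          qed
        qed
      qed
      show "f ` CS \<subseteq> PiE D (\<lambda>_. {..N})"
      proof
        fix g assume "g \<in> f ` CS"
        then obtain c where c: "c \<in> CS" "g = f c" by auto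
        have "\<forall>p\<in>D. c (fst p) (snd p) \<in> {..N}" using cN[OF c(1)] unfolding D_def by auto
        then show "g \<in> PiE D (\<lambda>_. {..N})" unfolding c(2) f_def by (simp add: restrict_PiE_iff)
      qed
      show "finite (PiE D (\<lambda>_. {..N}))" using finD by (simp add: finite_PiE)
    qed
    also have "card (PiE D (\<lambda>_. {..N})) = Suc N ^ K"
      using finD unfolding K_def by (simp add: card_PiE)
    finally have cCS: "real (card CS) \<le> real (Suc N) ^ K"
      by (metis of_nat_le_iff of_nat_power)
    have lnIN: "ln 2 \<le> ln IN" using IN2 by simp
    have ln2: "0 < ln (2::real)" by simp
    have "real N \<le> log 2 IN"
    proof -
      have "0 \<le> \<lfloor>log 2 IN\<rfloor>" using IN2 by simp
      then show ?thesis unfolding N_def by (simp add: of_nat_nat)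
    qed
    also have "log 2 IN = ln IN / ln 2" by (simp add: log_def)
    finally have "real (Suc N) \<le> ln IN / ln 2 + 1" by simp
    also have "\<dots> \<le> 2 / ln 2 * ln IN"
    proof -
      have "1 \<le> ln IN / ln 2" using lnIN ln2 by simp
      then show ?thesis by (simp add: field_simps)
    qed
    finally have pw: "real (Suc N) ^ K \<le> (2 / ln 2 * ln IN) ^ K" by (intro power_mono) auto
    have e: "(2 / ln 2 * ln IN) ^ K = (2 / ln 2) ^ K * ln IN ^ K" by (rule power_mult_distrib)
    have cCS2: "real (card CS) \<le> (2 / ln 2) ^ K * ln IN ^ K"
      using order_trans[OF cCS pw] e by simp
    have "MO_bound 2 I attr R \<le> ((2 / ln 2) ^ K * ln IN ^ K) * (2 ^ m * AG)"
      using MB1 cCS2 AG0 by (meson mult_right_mono order_trans zero_le_mult_iff zero_le_numeral zero_le_power)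
    then show "MO_bound 2 I attr R \<le> (2 / ln 2) ^ K * 2 ^ m * ln (input_size I R) ^ K * AGM (input_size I R) I attr R"
      unfolding IN_def[symmetric] AG_def[symmetric] by (simp add: algebra_simps)
  qed
qed

end
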